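(* Let $r>0$, $\theta\in\mathbb{R}$, $\sigma>0$, and let $Y\sim\mathrm{VG}(r,\theta,\sigma,0)$. Set $\lambda_{\pm}=(\sqrt{\theta^2+\sigma^2}\pm\theta)/\sigma^2$. Then for every integer $k\geq1$, \[\mathbb{E}[Y^k]=\frac{\sigma^{2k}}{(\Gamma(r/2))^2}\sum_{j=0}^k\binom{k}{j}(-\lambda_-)^j\lambda_+^{k-j}\,\Gamma\Big(\frac{r}{2}+j\Big)\Gamma\Big(\frac{r}{2}+k-j\Big).\]
   Context: For $r>0$, $\theta\in\mathbb{R}$, $\sigma>0$, $\mu\in\mathbb{R}$, the variance-gamma distribution $\mathrm{VG}(r,\theta,\sigma,\mu)$ is the probability distribution on $\mathbb{R}$ with density \[p(x) = \frac{1}{\sigma\sqrt{\pi}\, \Gamma(r/2)} \mathrm{e}^{\theta (x-\mu)/\sigma^2} \bigg(\frac{|x-\mu|}{2\sqrt{\theta^2 + \sigma^2}}\bigg)^{\frac{r-1}{2}} K_{\frac{r-1}{2}}\bigg(\frac{\sqrt{\theta^2 + \sigma^2}}{\sigma^2} |x-\mu| \bigg),\quad x\in\mathbb{R},\] where $K_\nu(x)=\int_0^\infty \mathrm{e}^{-x\cosh t}\cosh(\nu t)\,\mathrm{d}t$, $x>0$, is the modified Bessel function of the second kind. *)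

theory Defs
  imports "HOL-Probability.Probability"
begin

definition besselK :: "real \<Rightarrow> real \<Rightarrow> real" where
  "besselK \<nu> x = (LINT t:{0<..}|lborel. exp (- x * cosh t) * cosh (\<nu> * t))"

text \<open>Density of the variance-gamma distribution VG(r, theta, sigma, mu).
  (At the single point x = mu the formula is not meaningful; this is a null set.)\<close>
definition vg_density :: "real \<Rightarrow> real \<Rightarrow> real \<Rightarrow> real \<Rightarrow> real \<Rightarrow> real" where
  "vg_density r \<theta> \<sigma> \<mu> x =
     1 / (\<sigma> * sqrt pi * Gamma (r / 2)) * exp (\<theta> * (x - \<mu>) / \<sigma>\<^sup>2)
     * (\<bar>x - \<mu>\<bar> / (2 * sqrt (\<theta>\<^sup>2 + \<sigma>\<^sup>2))) powr ((r - 1) / 2)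
     * besselK ((r - 1) / 2) (sqrt (\<theta>\<^sup>2 + \<sigma>\<^sup>2) / \<sigma>\<^sup>2 * \<bar>x - \<mu>\<bar>)"

end

theory Submission
  imports Defs "HOL-Computational_Algebra.Formal_Power_Series"
begin

unbundle no vec_syntax
unbundle fps_syntax

definition PA :: "real \<Rightarrow> real fps" where
  "PA a = Abs_fps (\<lambda>n. pochhammer a n / fact n)"

lemma PA_ode: "(1 - fps_X) * fps_deriv (PA a) = fps_const a * PA a"
proof (rule fps_ext)
  fix n
  show "((1 - fps_X) * fps_deriv (PA a)) $ n = (fps_const a * PA a) $ n"
  proof (cases n)
    case 0
    then show ?thesis by (simp add: PA_def algebra_simps)
  next
    case (Suc m)
    have "((1 - fps_X) * fps_deriv (PA a)) $ n = fps_deriv (PA a) $ n - fps_deriv (PA a) $ m"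
      using Suc by (simp add: algebra_simps)
    also have "\<dots> = pochhammer a (Suc n) / fact n - pochhammer a (Suc m) / fact m"
      by (simp add: PA_def fact_Suc field_simps del: of_nat_Suc pochhammer_Suc)
    also have "\<dots> = a * (pochhammer a n / fact n)"
    proof -
      have f: "fact n = real (Suc m) * fact m" using Suc by (simp add: fact_Suc)
      have p: "pochhammer a (Suc n) = pochhammer a (Suc m) * (a + real (Suc m))"
        using Suc by (simp only: pochhammer_Suc)
      have fm: "fact m > (0::real)" by simp
      have d: "fact m + fact m * real m \<noteq> 0" using fm
        by (metis add_pos_nonneg less_irrefl mult_nonneg_nonneg of_nat_0_le_iff order_less_imp_le)
      have gen: "P * (a + k) / (k * F) - P / F = a * (P / (k * F))" if "k \<noteq> 0" "F \<noteq> 0" for P k F :: real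
        using that by (simp add: field_simps)
      show ?thesis unfolding f p using Suc fm by (subst gen) auto
    qed
    finally show ?thesis by (simp add: PA_def)
  qed
qed

lemma PA_0 [simp]: "PA a $ 0 = 1"
  by (simp add: PA_def)

lemma compose_ode:
  assumes h0: "h $ 0 = 0"
  shows "(1 - h) * fps_deriv (PA a oo h) = fps_const a * fps_deriv h * (PA a oo h)"
proof -
  have "(1 - h) * fps_deriv (PA a oo h) = ((1 - fps_X) oo h) * ((fps_deriv (PA a) oo h) * fps_deriv h)"
    using h0 by (simp add: fps_compose_deriv fps_compose_sub_distrib)
  also have "\<dots> = (((1 - fps_X) * fps_deriv (PA a)) oo h) * fps_deriv h"
    using h0 by (simp add: fps_compose_mult_distrib)
  also have "\<dots> = fps_const a * (PA a oo h) * fps_deriv h"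
    by (simp add: PA_ode fps_const_mult_apply_left)
  finally show ?thesis by (simp add: algebra_simps)
qed

lemma fps_ode_unique:
  fixes Y Z R :: "real fps"
  assumes "fps_deriv Y = R * Y" "fps_deriv Z = R * Z" "Y $ 0 = Z $ 0"
  shows "Y = Z"
proof -
  define W where "W = Y - Z"
  have W': "fps_deriv W = R * W" using assms(1,2) by (simp add: W_def algebra_simps)
  have W0: "W $ 0 = 0" using assms(3) by (simp add: W_def)
  have "\<forall>j\<le>n. W $ j = 0" for n
  proof (induction n)
    case 0 then show ?case using W0 by simp
  next
    case (Suc n)
    have "(fps_deriv W) $ n = (R * W) $ n" using W' by simp
    also have "\<dots> = 0" using Suc.IH by (auto simp: fps_mult_nth intro!: sum.neutral)
    finally have "W $ Suc n = 0" by simp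
    then show ?case using Suc.IH le_Suc_eq by auto
  qed
  then have "W = 0" by (auto simp: fps_eq_iff)
  then show ?thesis by (simp add: W_def)
qed

lemma fps_ode_unique':
  fixes Y Z D S :: "real fps"
  assumes "D $ 0 \<noteq> 0" "D * fps_deriv Y = S * Y" "D * fps_deriv Z = S * Z" "Y $ 0 = Z $ 0"
  shows "Y = Z"
proof (rule fps_ode_unique)
  have I: "inverse D * D = 1" using assms(1) by (rule inverse_mult_eq_1)
  show "fps_deriv Y = (inverse D * S) * Y"
    using arg_cong[OF assms(2), of "\<lambda>u. inverse D * u"] I by (simp add: mult.assoc[symmetric])
  show "fps_deriv Z = (inverse D * S) * Z"
    using arg_cong[OF assms(3), of "\<lambda>u. inverse D * u"] I by (simp add: mult.assoc[symmetric])
qed (fact assms(4))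

lemma key_fps:
  fixes p w a :: real
  shows "(PA a oo (fps_const w * fps_X)) * (PA a oo (fps_const p * fps_X)) =
         PA a oo (fps_const (p + w) * fps_X - fps_const (p * w) * fps_X ^ 2)"
proof -
  define f where "f = fps_const (p + w) * fps_X - fps_const (p * w) * fps_X ^ 2"
  define U where "U = PA a oo (fps_const p * fps_X)"
  define V where "V = PA a oo (fps_const w * fps_X)"
  define P where "P = fps_const p"
  define W where "W = fps_const w"
  define A where "A = fps_const a"
  have f0: "f $ 0 = 0" by (simp add: f_def)
  have fe: "f = (P + W) * fps_X - P * W * (fps_X * fps_X)"
    by (simp add: f_def P_def W_def power2_eq_square mult.assoc)
  have fd: "fps_deriv f = (P + W) - 2 * P * W * fps_X"
    unfolding fe P_def W_def by (simp add: algebra_simps)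
  have eU: "(1 - P * fps_X) * fps_deriv U = A * P * U"
    using compose_ode[of "fps_const p * fps_X" a] by (simp add: U_def P_def A_def)
  have eV: "(1 - W * fps_X) * fps_deriv V = A * W * V"
    using compose_ode[of "fps_const w * fps_X" a] by (simp add: V_def W_def A_def)
  have G: "(1 - f) * fps_deriv (PA a oo f) = (A * fps_deriv f) * (PA a oo f)"
    using compose_ode[OF f0, of a] by (simp add: A_def)
  have H: "(1 - f) * fps_deriv (V * U) = (A * fps_deriv f) * (V * U)"
  proof -
    have D: "1 - f = (1 - P * fps_X) * (1 - W * fps_X)"
      by (simp add: fe algebra_simps)
    have "(1 - f) * fps_deriv (V * U) =
          U * (1 - P * fps_X) * ((1 - W * fps_X) * fps_deriv V) + V * (1 - W * fps_X) * ((1 - P * fps_X) * fps_deriv U)"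
      unfolding D fps_deriv_mult by (simp add: algebra_simps)
    also have "\<dots> = U * (1 - P * fps_X) * (A * W * V) + V * (1 - W * fps_X) * (A * P * U)"
      by (simp only: eU eV)
    also have "\<dots> = (A * fps_deriv f) * (V * U)"
      unfolding fd by (simp add: algebra_simps)
    finally show ?thesis .
  qed
  have "V * U = PA a oo f"
  proof (rule fps_ode_unique'[OF _ H G])
    show "(1 - f) $ 0 \<noteq> 0" using f0 by simp
    show "(V * U) $ 0 = (PA a oo f) $ 0" by (simp add: U_def V_def)
  qed
  then show ?thesis by (simp add: U_def V_def f_def)
qed

lemma lin_power_nth:
  fixes c e :: real
  shows "((fps_const c + fps_const e * fps_X) ^ n) $ j = of_nat (n choose j) * c ^ (n - j) * e ^ j"
proof (induction n arbitrary: j)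
  case 0
  then show ?case by (cases j) auto
next
  case (Suc n)
  have "((fps_const c + fps_const e * fps_X) ^ Suc n) $ j =
        c * ((fps_const c + fps_const e * fps_X) ^ n) $ j +
        e * (if j = 0 then 0 else ((fps_const c + fps_const e * fps_X) ^ n) $ (j - 1))"
  proof -
    have "(fps_const c + fps_const e * fps_X) ^ Suc n =
          fps_const c * (fps_const c + fps_const e * fps_X) ^ n + fps_const e * (fps_X * (fps_const c + fps_const e * fps_X) ^ n)"
      by (simp only: power_Suc distrib_right mult.assoc)
    then show ?thesis by (simp only: fps_add_nth fps_mult_left_const_nth fps_X_mult_nth)
  qed
  also have "\<dots> = of_nat (Suc n choose j) * c ^ (Suc n - j) * e ^ j"
  proof (cases j)
    case 0
    then show ?thesis using Suc by simp
  next
    case (Suc i)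
    show ?thesis
    proof (cases "i < n")
      case True
      then have "Suc n - j = Suc (n - Suc i)" "n - i = Suc (n - Suc i)" using Suc by auto
      then show ?thesis using Suc \<open>i < n\<close> Suc.IH by (simp add: algebra_simps)
    next
      case False
      then have "n choose Suc i = 0" by simp
      moreover have "Suc n - j = n - i" using Suc False by simp
      ultimately show ?thesis using Suc Suc.IH by (simp add: algebra_simps)
    qed
  qed
  finally show ?case .
qed

lemma coeff_lhs:
  "((PA a oo (fps_const w * fps_X)) * (PA a oo (fps_const p * fps_X))) $ k =
     (\<Sum>j=0..k. w ^ j * PA a $ j * (p ^ (k - j) * PA a $ (k - j)))"
  by (simp add: fps_mult_nth fps_compose_linear)

lemma coeff_rhs:
  fixes c e :: real
  shows "(PA a oo (fps_const c * fps_X + fps_const e * fps_X ^ 2)) $ k =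
     (\<Sum>i=0..k. PA a $ (k - i) * of_nat ((k - i) choose i) * c ^ (k - i - i) * e ^ i)"
proof -
  have fe: "fps_const c * fps_X + fps_const e * fps_X ^ 2 = fps_X * (fps_const c + fps_const e * fps_X)"
    by (simp add: algebra_simps power2_eq_square)
  have pw: "((fps_const c * fps_X + fps_const e * fps_X ^ 2) ^ n) $ k =
            (if k < n then 0 else of_nat (n choose (k - n)) * c ^ (n - (k - n)) * e ^ (k - n))" for n
    unfolding fe power_mult_distrib fps_X_power_mult_nth lin_power_nth ..
  have "(PA a oo (fps_const c * fps_X + fps_const e * fps_X ^ 2)) $ k =
        (\<Sum>n=0..k. PA a $ n * (if k < n then 0 else of_nat (n choose (k - n)) * c ^ (n - (k - n)) * e ^ (k - n)))"
    unfolding fps_compose_nth pw ..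
  also have "\<dots> = (\<Sum>i=0..k. PA a $ (k - i) * (if k < k - i then 0 else of_nat ((k - i) choose (k - (k - i))) * c ^ ((k - i) - (k - (k - i))) * e ^ (k - (k - i))))"
    by (subst sum.atLeastAtMost_rev) simp
  also have "\<dots> = (\<Sum>i=0..k. PA a $ (k - i) * of_nat ((k - i) choose i) * c ^ (k - i - i) * e ^ i)"
    by (intro sum.cong) auto
  finally show ?thesis .
qed


lemma gamma_moment:
  fixes b :: real
  assumes b: "b > 0"
  shows "has_bochner_integral lborel (\<lambda>v. indicator {0<..} v * v powr (b - 1) * exp (- v / 2)) (2 powr b * Gamma b)"
proof (rule has_bochner_integral_nn_integral)
  define f where "f v = indicator {0<..} v * v powr (b - 1) * exp (- v / 2)" for v :: real
  have fm: "f \<in> borel_measurable borel" unfolding f_def by measurable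
  have f2: "f (0 + 2 * x) = 2 powr (b - 1) * (indicator {0..} x * x powr (b - 1) / exp x)" for x
  proof (cases "x > 0")
    case True
    then show ?thesis by (simp add: f_def powr_mult exp_minus field_simps)
  next
    case False
    then show ?thesis by (cases "x = 0") (auto simp: f_def)
  qed
  have "(\<integral>\<^sup>+v. ennreal (f v) \<partial>lborel) = 2 * (\<integral>\<^sup>+x. ennreal (f (0 + 2 * x)) \<partial>lborel)"
    using nn_integral_real_affine[of "\<lambda>v. ennreal (f v)" 2 0] fm by simp
  also have "\<dots> = 2 * (\<integral>\<^sup>+x. ennreal (2 powr (b - 1)) * ennreal (indicator {0..} x * x powr (b - 1) / exp x) \<partial>lborel)"
    unfolding f2 by (intro arg_cong2[where f="(*)"] nn_integral_cong refl) (rule ennreal_mult', simp)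
  also have "\<dots> = 2 * (ennreal (2 powr (b - 1)) * Gamma b)"
    using Gamma_conv_nn_integral_real[OF b] by (subst nn_integral_cmult) auto
  also have "\<dots> = ennreal 2 * ennreal (2 powr (b - 1) * Gamma b)"
    using b by (simp add: ennreal_mult Gamma_real_pos less_imp_le)
  also have "\<dots> = ennreal (2 * (2 powr (b - 1) * Gamma b))"
    using b by (simp add: ennreal_mult Gamma_real_pos less_imp_le)
  also have "2 * (2 powr (b - 1) * Gamma b) = 2 powr b * Gamma b"
    by (simp add: powr_diff)
  finally show "(\<integral>\<^sup>+v. ennreal (indicator {0<..} v * v powr (b - 1) * exp (- v / 2)) \<partial>lborel) = ennreal (2 powr b * Gamma b)"
    by (simp add: f_def)
  show "0 \<le> 2 powr b * Gamma b" using b by (simp add: Gamma_real_pos less_imp_le)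
qed auto

lemma SUP_ind:
  fixes S :: "nat \<Rightarrow> real set" and g :: real
  assumes inc: "incseq S" and un: "x \<in> (\<Union>n. S n) \<longleftrightarrow> x \<in> T" and g: "0 \<le> g"
  shows "(SUP n. ennreal (g * indicator (S n) x)) = ennreal (g * indicator T x)"
proof (cases "x \<in> T")
  case True
  then obtain N where N: "x \<in> S N" using un by auto
  show ?thesis
  proof (rule antisym)
    show "(SUP n. ennreal (g * indicator (S n) x)) \<le> ennreal (g * indicator T x)"
      using True g by (intro SUP_least) (auto simp: indicator_def)
    have "ennreal (g * indicator T x) = ennreal (g * indicator (S N) x)" using True N by simp
    also have "\<dots> \<le> (SUP n. ennreal (g * indicator (S n) x))" by (rule SUP_upper) simp
    finally show "ennreal (g * indicator T x) \<le> (SUP n. ennreal (g * indicator (S n) x))" .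
  qed
next
  case False
  then have "x \<notin> S n" for n using un by auto
  then show ?thesis using False by simp
qed

lemma nn_integral_exp_subst:
  fixes f :: "real \<Rightarrow> real" and c :: real
  assumes fm[measurable]: "f \<in> borel_measurable borel" and f0: "\<And>x. 0 \<le> f x" and c: "c > 0"
  shows "(\<integral>\<^sup>+x. ennreal (f x * indicator {0<..} x) \<partial>lborel) =
         (\<integral>\<^sup>+t. ennreal (f (c * exp t) * (c * exp t)) \<partial>lborel)"
proof -
  define I where "I n = {c * exp (- real n) .. c * exp (real n)}" for n
  define J where "J n = {- real n .. real n}" for n
  have step: "(\<integral>\<^sup>+x. ennreal (f x * indicator (I n) x) \<partial>lborel) =
              (\<integral>\<^sup>+t. ennreal (f (c * exp t) * (c * exp t) * indicator (J n) t) \<partial>lborel)" for n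
  proof -
    have d: "((\<lambda>t. c * exp t) has_real_derivative c * exp t) (at t)" for t
      by (auto intro!: derivative_eq_intros)
    have "continuous_on {- real n..real n} (\<lambda>t. c * exp t)"
      by (intro continuous_intros)
    from nn_integral_substitution[where f=f and g="\<lambda>t. c * exp t" and g'="\<lambda>t. c * exp t" and a="- real n" and b="real n", OF _ d this]
    show ?thesis using c unfolding I_def J_def by (simp add: set_borel_measurable_def)
  qed
  have incI: "incseq I" unfolding I_def incseq_def using c
    by (auto intro!: mult_left_mono)
  have incJ: "incseq J" unfolding J_def incseq_def by auto
  have unI: "x \<in> (\<Union>n. I n) \<longleftrightarrow> x \<in> {0<..}" for x
  proof
    assume "x \<in> (\<Union>n. I n)" then show "x \<in> {0<..}" using c
      by (auto simp: I_def intro: less_le_trans[OF mult_pos_pos[OF c exp_gt_zero]])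
  next
    assume x: "x \<in> {0<..}"
    obtain n :: nat where n: "\<bar>ln (x / c)\<bar> < real n" using reals_Archimedean2 by blast
    have xc: "x / c = exp (ln (x / c))" using x c by simp
    have "exp (- real n) \<le> exp (ln (x / c))" using n by (subst exp_le_cancel_iff) linarith
    then have "exp (- real n) \<le> x / c" using xc by simp
    moreover have "exp (ln (x / c)) \<le> exp (real n)" using n by (subst exp_le_cancel_iff) linarith
    then have "x / c \<le> exp (real n)" using xc by simp
    ultimately have "x \<in> I n" using c by (auto simp: I_def field_simps)
    then show "x \<in> (\<Union>n. I n)" by auto
  qed
  have unJ: "t \<in> (\<Union>n. J n) \<longleftrightarrow> t \<in> UNIV" for t
  proof -
    obtain n :: nat where "\<bar>t\<bar> < real n" using reals_Archimedean2 by blast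
    then have "t \<in> J n" by (auto simp: J_def)
    then show ?thesis by auto
  qed
  have "(\<integral>\<^sup>+x. ennreal (f x * indicator {0<..} x) \<partial>lborel) =
        (\<integral>\<^sup>+x. (SUP n. ennreal (f x * indicator (I n) x)) \<partial>lborel)"
    by (intro nn_integral_cong SUP_ind[symmetric] incI unI f0)
  also have "\<dots> = (SUP n. (\<integral>\<^sup>+x. ennreal (f x * indicator (I n) x) \<partial>lborel))"
  proof (rule nn_integral_monotone_convergence_SUP)
    show "incseq (\<lambda>n x. ennreal (f x * indicator (I n) x))"
      using incI f0 by (auto simp: incseq_def le_fun_def indicator_def intro!: ennreal_leI)
    show "(\<lambda>x. ennreal (f x * indicator (I n) x)) \<in> borel_measurable lborel" for n
      unfolding I_def by measurable
  qed
  also have "\<dots> = (SUP n. (\<integral>\<^sup>+t. ennreal (f (c * exp t) * (c * exp t) * indicator (J n) t) \<partial>lborel))"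
    using step by simp
  also have "\<dots> = (\<integral>\<^sup>+t. (SUP n. ennreal (f (c * exp t) * (c * exp t) * indicator (J n) t)) \<partial>lborel)"
  proof (rule nn_integral_monotone_convergence_SUP[symmetric])
    show "incseq (\<lambda>n t. ennreal (f (c * exp t) * (c * exp t) * indicator (J n) t))"
      using incJ f0 c by (auto simp: incseq_def le_fun_def indicator_def intro!: ennreal_leI)
    show "(\<lambda>t. ennreal (f (c * exp t) * (c * exp t) * indicator (J n) t)) \<in> borel_measurable lborel" for n
      unfolding J_def by measurable
  qed
  also have "\<dots> = (\<integral>\<^sup>+t. ennreal (f (c * exp t) * (c * exp t) * indicator UNIV t) \<partial>lborel)"
    using f0 c by (intro nn_integral_cong SUP_ind incJ unJ) simp
  finally show ?thesis by simp
qed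

lemma borel_measurable_cosh_real [measurable]: "(cosh :: real \<Rightarrow> real) \<in> borel_measurable borel"
  by (intro borel_measurable_continuous_onI continuous_intros)

lemma K_subst:
  fixes A B \<nu> :: real
  assumes A: "A > 0" and B: "B > 0"
  shows "(\<integral>\<^sup>+v. ennreal (v powr (\<nu> - 1) * exp (- A / v - B * v) * indicator {0<..} v) \<partial>lborel) =
         ennreal (2 * sqrt (A / B) powr \<nu>) *
         (\<integral>\<^sup>+t. ennreal (exp (- (2 * sqrt (A * B)) * cosh t) * cosh (\<nu> * t) * indicator {0<..} t) \<partial>lborel)"
proof -
  define \<rho> where "\<rho> = sqrt (A / B)"
  define z where "z = 2 * sqrt (A * B)"
  define f where "f v = v powr (\<nu> - 1) * exp (- A / v - B * v)" for v :: real
  have \<rho>: "\<rho> > 0" using A B by (simp add: \<rho>_def)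
  have r0: "\<rho> * sqrt (A * B) = A"
  proof -
    have "\<rho> * sqrt (A * B) = sqrt (A / B * (A * B))" by (simp only: \<rho>_def real_sqrt_mult[symmetric])
    also have "A / B * (A * B) = A ^ 2" using B by (simp add: field_simps power2_eq_square)
    finally show ?thesis using A by simp
  qed
  have r1: "A / \<rho> = sqrt (A * B)" using r0 \<rho> by (simp add: field_simps)
  have r2: "B * \<rho> = sqrt (A * B)"
  proof -
    have "B * \<rho> = sqrt (B ^ 2 * (A / B))" using B by (simp only: \<rho>_def real_sqrt_mult real_sqrt_abs abs_of_pos)
    also have "B ^ 2 * (A / B) = A * B" using B by (simp add: field_simps power2_eq_square)
    finally show ?thesis .
  qed
  have fm: "f \<in> borel_measurable borel" unfolding f_def by measurable
  have f0: "0 \<le> f v" for v unfolding f_def by simp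
  define g where "g t = exp (\<nu> * t) * exp (- z * cosh t)" for t
  have pt: "f (\<rho> * exp t) * (\<rho> * exp t) = \<rho> powr \<nu> * g t" for t
  proof -
    have v: "\<rho> * exp t > 0" using \<rho> by simp
    have "(\<rho> * exp t) powr (\<nu> - 1) * (\<rho> * exp t) = (\<rho> * exp t) powr \<nu>"
    proof -
      have "(\<rho> * exp t) * (\<rho> * exp t) powr (\<nu> - 1) = (\<rho> * exp t) powr (1 + (\<nu> - 1))"
        by (rule powr_mult_base) (use v in simp)
      then show ?thesis by (simp add: mult.commute)
    qed
    also have "\<dots> = \<rho> powr \<nu> * exp (\<nu> * t)"
      using \<rho> by (simp add: powr_mult exp_powr_real mult.commute)
    finally have p1: "(\<rho> * exp t) powr (\<nu> - 1) * (\<rho> * exp t) = \<rho> powr \<nu> * exp (\<nu> * t)" .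
    have "A / (\<rho> * exp t) + B * (\<rho> * exp t) = (A / \<rho>) * exp (- t) + (B * \<rho>) * exp t"
      by (simp add: exp_minus field_simps)
    also have "\<dots> = z * cosh t" unfolding r1 r2 z_def cosh_field_def by (simp add: field_simps)
    finally have p2: "- A / (\<rho> * exp t) - B * (\<rho> * exp t) = - z * cosh t" by simp
    show ?thesis unfolding f_def g_def using p1 p2
      by (metis (no_types, lifting) mult.assoc mult.commute)
  qed
  have gm: "g \<in> borel_measurable borel" unfolding g_def by measurable
  have g0: "0 \<le> g t" for t unfolding g_def by simp
  have "(\<integral>\<^sup>+v. ennreal (v powr (\<nu> - 1) * exp (- A / v - B * v) * indicator {0<..} v) \<partial>lborel) =
        (\<integral>\<^sup>+v. ennreal (f v * indicator {0<..} v) \<partial>lborel)"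
    by (simp add: f_def)
  also have "\<dots> = (\<integral>\<^sup>+t. ennreal (f (\<rho> * exp t) * (\<rho> * exp t)) \<partial>lborel)"
    by (rule nn_integral_exp_subst[OF fm f0 \<rho>])
  also have "\<dots> = (\<integral>\<^sup>+t. ennreal (\<rho> powr \<nu>) * ennreal (g t) \<partial>lborel)"
    unfolding pt by (intro nn_integral_cong) (simp add: ennreal_mult')
  also have "\<dots> = ennreal (\<rho> powr \<nu>) * (\<integral>\<^sup>+t. ennreal (g t) \<partial>lborel)"
    using gm by (simp add: nn_integral_cmult)
  also have "(\<integral>\<^sup>+t. ennreal (g t) \<partial>lborel) =
        (\<integral>\<^sup>+t. ennreal (g t * indicator {0<..} t) + ennreal (g t * indicator {..<0} t) \<partial>lborel)"
  proof (rule nn_integral_cong_AE)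
    show "AE t in lborel. ennreal (g t) = ennreal (g t * indicator {0<..} t) + ennreal (g t * indicator {..<0} t)"
      using AE_lborel_singleton[of 0] by eventually_elim (auto simp: indicator_def)
  qed
  also have "\<dots> = (\<integral>\<^sup>+t. ennreal (g t * indicator {0<..} t) \<partial>lborel) + (\<integral>\<^sup>+t. ennreal (g t * indicator {..<0} t) \<partial>lborel)"
    using gm by (intro nn_integral_add) auto
  also have "(\<integral>\<^sup>+t. ennreal (g t * indicator {..<0} t) \<partial>lborel) =
             (\<integral>\<^sup>+t. ennreal (g (- t) * indicator {0<..} t) \<partial>lborel)"
    using nn_integral_real_affine[of "\<lambda>t. ennreal (g t * indicator {..<0} t)" "-1" 0] gm
    by (simp add: indicator_def)
  also have "(\<integral>\<^sup>+t. ennreal (g t * indicator {0<..} t) \<partial>lborel) + (\<integral>\<^sup>+t. ennreal (g (- t) * indicator {0<..} t) \<partial>lborel) =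
             (\<integral>\<^sup>+t. ennreal (g t * indicator {0<..} t) + ennreal (g (- t) * indicator {0<..} t) \<partial>lborel)"
    using gm by (intro nn_integral_add[symmetric]) auto
  also have "\<dots> = (\<integral>\<^sup>+t. ennreal 2 * ennreal (exp (- z * cosh t) * cosh (\<nu> * t) * indicator {0<..} t) \<partial>lborel)"
  proof (rule nn_integral_cong)
    fix t :: real
    have "g t + g (- t) = 2 * (exp (- z * cosh t) * cosh (\<nu> * t))"
      unfolding g_def cosh_field_def by (simp add: field_simps)
    then show "ennreal (g t * indicator {0<..} t) + ennreal (g (- t) * indicator {0<..} t) =
          ennreal 2 * ennreal (exp (- z * cosh t) * cosh (\<nu> * t) * indicator {0<..} t)"
      using g0[of t] g0[of "-t"]
      by (auto simp: indicator_def ennreal_plus[symmetric] ennreal_mult' simp del: ennreal_plus)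
  qed
  also have "\<dots> = ennreal 2 * (\<integral>\<^sup>+t. ennreal (exp (- z * cosh t) * cosh (\<nu> * t) * indicator {0<..} t) \<partial>lborel)"
    by (simp add: nn_integral_cmult)
  finally have X: "(\<integral>\<^sup>+v. ennreal (v powr (\<nu> - 1) * exp (- A / v - B * v) * indicator {0<..} v) \<partial>lborel) =
     ennreal (\<rho> powr \<nu>) * (ennreal 2 * (\<integral>\<^sup>+t. ennreal (exp (- z * cosh t) * cosh (\<nu> * t) * indicator {0<..} t) \<partial>lborel))" .
  have e2: "ennreal (2 * sqrt (A / B) powr \<nu>) = ennreal 2 * ennreal (sqrt (A / B) powr \<nu>)"
    by (rule ennreal_mult) auto
  show ?thesis using X unfolding \<rho>_def z_def by (simp only: e2 mult_ac)
qed

lemma nn_besselK: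
  fixes z \<nu> :: real
  assumes fin: "(\<integral>\<^sup>+t. ennreal (exp (- z * cosh t) * cosh (\<nu> * t) * indicator {0<..} t) \<partial>lborel) \<noteq> \<infinity>"
  shows "(\<integral>\<^sup>+t. ennreal (exp (- z * cosh t) * cosh (\<nu> * t) * indicator {0<..} t) \<partial>lborel) =
         ennreal (LINT t:{0<..}|lborel. exp (- z * cosh t) * cosh (\<nu> * t))"
proof -
  define f where "f t = exp (- z * cosh t) * cosh (\<nu> * t) * indicator {0<..} t" for t :: real
  have fm: "f \<in> borel_measurable lborel" unfolding f_def by measurable
  have f0: "0 \<le> f t" for t
    unfolding f_def by (auto intro!: mult_nonneg_nonneg less_imp_le[OF cosh_real_pos])
  have int: "integrable lborel f"
  proof (rule integrableI_bounded[OF fm])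
    have "(\<integral>\<^sup>+x. ennreal (norm (f x)) \<partial>lborel) = (\<integral>\<^sup>+x. ennreal (f x) \<partial>lborel)"
      using f0 by (intro nn_integral_cong) simp
    then show "(\<integral>\<^sup>+x. ennreal (norm (f x)) \<partial>lborel) < \<infinity>"
      using fin by (simp add: f_def top.not_eq_extremum)
  qed
  have "(\<integral>\<^sup>+t. ennreal (f t) \<partial>lborel) = ennreal (integral\<^sup>L lborel f)"
    using nn_integral_eq_integral[OF int] f0 by simp
  moreover have "integral\<^sup>L lborel f = (LINT t:{0<..}|lborel. exp (- z * cosh t) * cosh (\<nu> * t))"
    unfolding set_lebesgue_integral_def f_def by (intro Bochner_Integration.integral_cong) (auto simp: indicator_def)
  ultimately show ?thesis by (simp add: f_def)
qed

lemma HN_eq: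
  fixes a \<theta> \<sigma> v x :: real
  assumes v: "v > 0" and \<sigma>: "\<sigma> > 0"
  shows "indicator {0<..} v * v powr (a - 1) * exp (- v / 2) / (Gamma a * 2 powr a) * normal_density (\<theta> * v) (\<sigma> * sqrt v) x =
    (1 / (Gamma a * 2 powr a * sqrt (2 * pi) * \<sigma>) * exp (\<theta> * x / \<sigma>\<^sup>2)) *
    (v powr ((a - 1/2) - 1) * exp (- (x\<^sup>2 / (2 * \<sigma>\<^sup>2)) / v - ((\<theta>\<^sup>2 + \<sigma>\<^sup>2) / (2 * \<sigma>\<^sup>2)) * v))"
  (is "?lhs = ?rhs")
proof -
  have sq: "sqrt (2 * pi * (\<sigma> * sqrt v)\<^sup>2) = sqrt (2 * pi) * \<sigma> * v powr (1/2)"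
    using v \<sigma> by (simp add: power_mult_distrib real_sqrt_mult powr_half_sqrt)
  have pw: "v powr (a - 1) / v powr (1/2) = v powr ((a - 1/2) - 1)"
    using v by (simp add: powr_diff[symmetric])
  have ex: "exp (- v / 2) * exp (- (x - \<theta> * v)\<^sup>2 / (2 * (\<sigma> * sqrt v)\<^sup>2)) =
            exp (\<theta> * x / \<sigma>\<^sup>2) * exp (- (x\<^sup>2 / (2 * \<sigma>\<^sup>2)) / v - ((\<theta>\<^sup>2 + \<sigma>\<^sup>2) / (2 * \<sigma>\<^sup>2)) * v)"
  proof -
    have "- v / 2 + - (x - \<theta> * v)\<^sup>2 / (2 * (\<sigma> * sqrt v)\<^sup>2) =
          \<theta> * x / \<sigma>\<^sup>2 + (- (x\<^sup>2 / (2 * \<sigma>\<^sup>2)) / v - ((\<theta>\<^sup>2 + \<sigma>\<^sup>2) / (2 * \<sigma>\<^sup>2)) * v)"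
      using v \<sigma> by (simp add: power_mult_distrib field_simps power2_eq_square)
    then show ?thesis by (simp only: exp_add[symmetric])
  qed
  have "indicator {0<..} v * v powr (a - 1) * exp (- v / 2) / (Gamma a * 2 powr a) * normal_density (\<theta> * v) (\<sigma> * sqrt v) x =
        (v powr (a - 1) / v powr (1/2)) * (exp (- v / 2) * exp (- (x - \<theta> * v)\<^sup>2 / (2 * (\<sigma> * sqrt v)\<^sup>2))) /
        (Gamma a * 2 powr a * sqrt (2 * pi) * \<sigma>)"
    unfolding normal_density_def sq using v by (simp add: mult_ac)
  also have "\<dots> = ?rhs" unfolding pw ex by simp
  finally show ?thesis .
qed

lemma mix_point:
  fixes r \<theta> \<sigma> x :: real
  assumes r: "r > 0" and \<sigma>: "\<sigma> > 0" and x: "x \<noteq> 0"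
  and fin: "(\<integral>\<^sup>+v. ennreal (indicator {0<..} v * v powr (r/2 - 1) * exp (- v / 2) / (Gamma (r/2) * 2 powr (r/2))
                     * normal_density (\<theta> * v) (\<sigma> * sqrt v) x) \<partial>lborel) \<noteq> \<infinity>"
  shows "(\<integral>\<^sup>+v. ennreal (indicator {0<..} v * v powr (r/2 - 1) * exp (- v / 2) / (Gamma (r/2) * 2 powr (r/2))
                     * normal_density (\<theta> * v) (\<sigma> * sqrt v) x) \<partial>lborel) = ennreal (vg_density r \<theta> \<sigma> 0 x)"
proof -
  define a where "a = r / 2"
  define \<nu> where "\<nu> = a - 1/2"
  define A where "A = x\<^sup>2 / (2 * \<sigma>\<^sup>2)"
  define B where "B = (\<theta>\<^sup>2 + \<sigma>\<^sup>2) / (2 * \<sigma>\<^sup>2)"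
  define C where "C = 1 / (Gamma a * 2 powr a * sqrt (2 * pi) * \<sigma>) * exp (\<theta> * x / \<sigma>\<^sup>2)"
  define s where "s = sqrt (\<theta>\<^sup>2 + \<sigma>\<^sup>2)"
  define IK where "IK = (\<integral>\<^sup>+t. ennreal (exp (- (2 * sqrt (A * B)) * cosh t) * cosh (\<nu> * t) * indicator {0<..} t) \<partial>lborel)"
  have a: "a > 0" using r by (simp add: a_def)
  have A: "A > 0" using x \<sigma> by (simp add: A_def)
  have B: "B > 0" using \<sigma> by (simp add: B_def add_nonneg_pos)
  have s: "s > 0" using \<sigma> by (simp add: s_def add_nonneg_pos)
  have C: "C > 0" using a \<sigma> by (simp add: C_def Gamma_real_pos)
  have "(\<integral>\<^sup>+v. ennreal (indicator {0<..} v * v powr (r/2 - 1) * exp (- v / 2) / (Gamma (r/2) * 2 powr (r/2))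
                     * normal_density (\<theta> * v) (\<sigma> * sqrt v) x) \<partial>lborel) =
        (\<integral>\<^sup>+v. ennreal C * ennreal (v powr (\<nu> - 1) * exp (- A / v - B * v) * indicator {0<..} v) \<partial>lborel)"
  proof (rule nn_integral_cong)
    fix v :: real
    show "ennreal (indicator {0<..} v * v powr (r/2 - 1) * exp (- v / 2) / (Gamma (r/2) * 2 powr (r/2))
                     * normal_density (\<theta> * v) (\<sigma> * sqrt v) x) =
          ennreal C * ennreal (v powr (\<nu> - 1) * exp (- A / v - B * v) * indicator {0<..} v)"
    proof (cases "v > 0")
      case True
      show ?thesis
        using HN_eq[OF True \<sigma>, of a \<theta> x] True C
        by (simp add: a_def[symmetric] \<nu>_def A_def B_def C_def ennreal_mult'[symmetric] mult_ac)
    next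
      case False
      then show ?thesis by simp
    qed
  qed
  also have "\<dots> = ennreal C * (\<integral>\<^sup>+v. ennreal (v powr (\<nu> - 1) * exp (- A / v - B * v) * indicator {0<..} v) \<partial>lborel)"
    by (simp add: nn_integral_cmult)
  also have "\<dots> = ennreal C * (ennreal (2 * sqrt (A / B) powr \<nu>) * IK)"
    unfolding IK_def by (subst K_subst[OF A B]) simp
  finally have eq: "(\<integral>\<^sup>+v. ennreal (indicator {0<..} v * v powr (r/2 - 1) * exp (- v / 2) / (Gamma (r/2) * 2 powr (r/2))
                     * normal_density (\<theta> * v) (\<sigma> * sqrt v) x) \<partial>lborel) = ennreal C * (ennreal (2 * sqrt (A / B) powr \<nu>) * IK)" .
  have rho: "sqrt (A / B) = \<bar>x\<bar> / s"
  proof -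
    have "A / B = (\<bar>x\<bar> / s)\<^sup>2" using \<sigma> s by (simp add: A_def B_def s_def power_divide field_simps)
    then show ?thesis using s by simp
  qed
  have zz: "2 * sqrt (A * B) = s / \<sigma>\<^sup>2 * \<bar>x\<bar>"
  proof -
    have "A * B = (s / \<sigma>\<^sup>2 * \<bar>x\<bar> / 2)\<^sup>2" using \<sigma> s by (simp add: A_def B_def s_def power_divide power_mult_distrib field_simps)
    then have "sqrt (A * B) = s / \<sigma>\<^sup>2 * \<bar>x\<bar> / 2" using s \<sigma> by simp
    then show ?thesis by simp
  qed
  have pos: "2 * sqrt (A / B) powr \<nu> > 0" using A B by simp
  have IKfin: "IK \<noteq> \<infinity>"
    using fin C pos unfolding eq by (auto simp: ennreal_mult_eq_top_iff)
  have IKeq: "IK = ennreal (besselK \<nu> (s / \<sigma>\<^sup>2 * \<bar>x\<bar>))"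
    using nn_besselK[OF IKfin[unfolded IK_def]] unfolding IK_def besselK_def zz by simp
  have p2: "2 powr \<nu> = 2 powr a / sqrt 2" by (simp add: \<nu>_def powr_diff powr_half_sqrt)
  have main: "C * (2 * sqrt (A / B) powr \<nu>) = 1 / (\<sigma> * sqrt pi * Gamma a) * exp (\<theta> * x / \<sigma>\<^sup>2) * (\<bar>x\<bar> / (2 * s)) powr \<nu>"
  proof -
    have "(\<bar>x\<bar> / (2 * s)) powr \<nu> = (\<bar>x\<bar> / s) powr \<nu> / 2 powr \<nu>"
      using s by (simp add: powr_divide powr_mult)
    also have "\<dots> = sqrt 2 * (\<bar>x\<bar> / s) powr \<nu> / 2 powr a" unfolding p2 by simp
    finally have Zeq: "(\<bar>x\<bar> / (2 * s)) powr \<nu> = sqrt 2 * (\<bar>x\<bar> / s) powr \<nu> / 2 powr a" .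
    have s2: "2 / sqrt 2 = sqrt (2::real)" by (simp add: real_div_sqrt)
    have "C * (2 * sqrt (A / B) powr \<nu>) = (2 / sqrt 2) * (\<bar>x\<bar> / s) powr \<nu> * exp (\<theta> * x / \<sigma>\<^sup>2) / (Gamma a * 2 powr a * sqrt pi * \<sigma>)"
      unfolding rho C_def by (simp add: real_sqrt_mult mult_ac)
    also have "\<dots> = 1 / (\<sigma> * sqrt pi * Gamma a) * exp (\<theta> * x / \<sigma>\<^sup>2) * (sqrt 2 * (\<bar>x\<bar> / s) powr \<nu> / 2 powr a)"
      unfolding s2 by (simp add: mult_ac)
    finally show ?thesis unfolding Zeq .
  qed
  have "ennreal C * (ennreal (2 * sqrt (A / B) powr \<nu>) * IK) =
        ennreal (C * (2 * sqrt (A / B) powr \<nu>) * besselK \<nu> (s / \<sigma>\<^sup>2 * \<bar>x\<bar>))"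
    unfolding IKeq using C pos by (simp add: ennreal_mult' mult.assoc)
  also have "C * (2 * sqrt (A / B) powr \<nu>) * besselK \<nu> (s / \<sigma>\<^sup>2 * \<bar>x\<bar>) = vg_density r \<theta> \<sigma> 0 x"
    unfolding main vg_density_def by (simp add: a_def \<nu>_def s_def diff_divide_distrib)
  finally show ?thesis using eq by simp
qed

definition Hg :: "real \<Rightarrow> real \<Rightarrow> real" where
  "Hg r v = indicator {0<..} v * v powr (r/2 - 1) * exp (- v / 2) / (Gamma (r/2) * 2 powr (r/2))"

lemma Hg_nonneg: "r > 0 \<Longrightarrow> 0 \<le> Hg r v"
  unfolding Hg_def by (auto intro!: divide_nonneg_pos mult_pos_pos Gamma_real_pos)

lemma Hg_meas [measurable]: "Hg r \<in> borel_measurable borel"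
  unfolding Hg_def by measurable

lemma normal_density_meas [measurable (raw)]:
  assumes [measurable]: "f \<in> borel_measurable M" "g \<in> borel_measurable M" "h \<in> borel_measurable M"
  shows "(\<lambda>x. normal_density (f x) (g x) (h x)) \<in> borel_measurable M"
  unfolding normal_density_def by measurable

lemma normal_density_affine_pt:
  assumes c: "c > 0"
  shows "normal_density \<mu> c (\<mu> + c * z) = std_normal_density z / c"
  using c by (simp add: normal_density_def real_sqrt_mult power_mult_distrib field_simps)

lemma affine_normal:
  fixes g :: "real \<Rightarrow> ennreal"
  assumes v: "v > 0" and \<sigma>: "\<sigma> > 0" and g[measurable]: "g \<in> borel_measurable borel"
  shows "(\<integral>\<^sup>+z. ennreal (std_normal_density z) * g (\<theta> * v + \<sigma> * sqrt v * z) \<partial>lborel) =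
         (\<integral>\<^sup>+x. ennreal (normal_density (\<theta> * v) (\<sigma> * sqrt v) x) * g x \<partial>lborel)"
proof -
  define c where "c = \<sigma> * sqrt v"
  have c: "c > 0" using v \<sigma> by (simp add: c_def)
  have "(\<integral>\<^sup>+x. ennreal (normal_density (\<theta> * v) c x) * g x \<partial>lborel) =
        ennreal \<bar>c\<bar> * (\<integral>\<^sup>+z. ennreal (normal_density (\<theta> * v) c (\<theta> * v + c * z)) * g (\<theta> * v + c * z) \<partial>lborel)"
    using c by (intro nn_integral_real_affine) auto
  also have "\<dots> = (\<integral>\<^sup>+z. ennreal c * (ennreal (std_normal_density z / c) * g (\<theta> * v + c * z)) \<partial>lborel)"
    using c by (subst nn_integral_cmult) (auto simp: normal_density_affine_pt)
  also have "\<dots> = (\<integral>\<^sup>+z. ennreal (std_normal_density z) * g (\<theta> * v + c * z) \<partial>lborel)"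
  proof (rule nn_integral_cong)
    fix z
    have "ennreal c * ennreal (std_normal_density z / c) = ennreal (std_normal_density z)"
      using c by (simp add: ennreal_mult[symmetric])
    then show "ennreal c * (ennreal (std_normal_density z / c) * g (\<theta> * v + c * z)) =
               ennreal (std_normal_density z) * g (\<theta> * v + c * z)"
      by (simp add: mult.assoc[symmetric])
  qed
  finally show ?thesis by (simp add: c_def)
qed

lemma chain:
  fixes g :: "real \<Rightarrow> ennreal"
  assumes r: "r > 0" and \<sigma>: "\<sigma> > 0" and g[measurable]: "g \<in> borel_measurable borel"
  shows "(\<integral>\<^sup>+w. ennreal (Hg r (fst w) * std_normal_density (snd w)) * g (\<theta> * fst w + \<sigma> * sqrt (fst w) * snd w) \<partial>(lborel \<Otimes>\<^sub>M lborel)) =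
         (\<integral>\<^sup>+x. (\<integral>\<^sup>+v. ennreal (Hg r v * normal_density (\<theta> * v) (\<sigma> * sqrt v) x) \<partial>lborel) * g x \<partial>lborel)"
proof -
  have "(\<integral>\<^sup>+w. ennreal (Hg r (fst w) * std_normal_density (snd w)) * g (\<theta> * fst w + \<sigma> * sqrt (fst w) * snd w) \<partial>(lborel \<Otimes>\<^sub>M lborel)) =
        (\<integral>\<^sup>+v. \<integral>\<^sup>+z. ennreal (Hg r v * std_normal_density z) * g (\<theta> * v + \<sigma> * sqrt v * z) \<partial>lborel \<partial>lborel)"
  proof -
    have m: "(\<lambda>w. ennreal (Hg r (fst w) * std_normal_density (snd w)) * g (\<theta> * fst w + \<sigma> * sqrt (fst w) * snd w))
             \<in> borel_measurable (lborel \<Otimes>\<^sub>M lborel)" by measurable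
    show ?thesis using lborel.nn_integral_fst[OF m] by simp
  qed
  also have "\<dots> = (\<integral>\<^sup>+v. \<integral>\<^sup>+x. ennreal (Hg r v * normal_density (\<theta> * v) (\<sigma> * sqrt v) x) * g x \<partial>lborel \<partial>lborel)"
  proof (rule nn_integral_cong)
    fix v :: real
    show "(\<integral>\<^sup>+z. ennreal (Hg r v * std_normal_density z) * g (\<theta> * v + \<sigma> * sqrt v * z) \<partial>lborel) =
          (\<integral>\<^sup>+x. ennreal (Hg r v * normal_density (\<theta> * v) (\<sigma> * sqrt v) x) * g x \<partial>lborel)"
    proof (cases "v > 0")
      case True
      have "(\<integral>\<^sup>+z. ennreal (Hg r v * std_normal_density z) * g (\<theta> * v + \<sigma> * sqrt v * z) \<partial>lborel) =
            ennreal (Hg r v) * (\<integral>\<^sup>+z. ennreal (std_normal_density z) * g (\<theta> * v + \<sigma> * sqrt v * z) \<partial>lborel)"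
        using Hg_nonneg[OF r] by (subst nn_integral_cmult[symmetric]) (auto simp: ennreal_mult mult.assoc)
      also have "\<dots> = ennreal (Hg r v) * (\<integral>\<^sup>+x. ennreal (normal_density (\<theta> * v) (\<sigma> * sqrt v) x) * g x \<partial>lborel)"
        using affine_normal[OF True \<sigma> g] by simp
      also have "\<dots> = (\<integral>\<^sup>+x. ennreal (Hg r v * normal_density (\<theta> * v) (\<sigma> * sqrt v) x) * g x \<partial>lborel)"
        using Hg_nonneg[OF r] by (subst nn_integral_cmult[symmetric]) (auto simp: ennreal_mult mult.assoc)
      finally show ?thesis .
    next
      case False
      then show ?thesis by (simp add: Hg_def)
    qed
  qed
  also have "\<dots> = (\<integral>\<^sup>+x. \<integral>\<^sup>+v. ennreal (Hg r v * normal_density (\<theta> * v) (\<sigma> * sqrt v) x) * g x \<partial>lborel \<partial>lborel)"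
    by (rule lborel_pair.Fubini'[symmetric]) measurable
  also have "\<dots> = (\<integral>\<^sup>+x. (\<integral>\<^sup>+v. ennreal (Hg r v * normal_density (\<theta> * v) (\<sigma> * sqrt v) x) \<partial>lborel) * g x \<partial>lborel)"
    by (intro nn_integral_cong nn_integral_multc) measurable
  finally show ?thesis .
qed

lemma Hg_integral:
  assumes r: "r > 0"
  shows "has_bochner_integral lborel (\<lambda>v. Hg r v * v ^ n) (2 ^ n * Gamma (r/2 + real n) / Gamma (r/2))"
proof -
  have b: "r/2 + real n > 0" using r by simp
  have "has_bochner_integral lborel (\<lambda>v. (indicator {0<..} v * v powr ((r/2 + real n) - 1) * exp (- v / 2)) / (Gamma (r/2) * 2 powr (r/2)))
          (2 powr (r/2 + real n) * Gamma (r/2 + real n) / (Gamma (r/2) * 2 powr (r/2)))"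
    by (intro has_bochner_integral_divide_zero gamma_moment[OF b])
  moreover have "(\<lambda>v. (indicator {0<..} v * v powr ((r/2 + real n) - 1) * exp (- v / 2)) / (Gamma (r/2) * 2 powr (r/2))) =
                 (\<lambda>v. Hg r v * v ^ n)"
  proof
    fix v :: real
    show "(indicator {0<..} v * v powr ((r/2 + real n) - 1) * exp (- v / 2)) / (Gamma (r/2) * 2 powr (r/2)) = Hg r v * v ^ n"
    proof (cases "v > 0")
      case True
      have "v powr ((r/2 + real n) - 1) = v powr (r/2 - 1) * v ^ n"
        using True by (simp add: powr_add[symmetric] powr_realpow[symmetric] algebra_simps)
      then show ?thesis using True by (simp add: Hg_def)
    qed (simp add: Hg_def)
  qed
  moreover have "2 powr (r/2 + real n) * Gamma (r/2 + real n) / (Gamma (r/2) * 2 powr (r/2)) = 2 ^ n * Gamma (r/2 + real n) / Gamma (r/2)"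
    by (simp add: powr_add powr_realpow)
  ultimately show ?thesis by simp
qed

lemma nn_integral_Hg: assumes r: "r > 0" shows "(\<integral>\<^sup>+v. ennreal (Hg r v) \<partial>lborel) = 1"
proof -
  have G: "Gamma (r/2) > 0" using r by (simp add: Gamma_real_pos)
  show ?thesis using Hg_integral[of r 0] Hg_nonneg[of r] G r
    by (subst nn_integral_eq_integral) (auto simp: has_bochner_integral_iff)
qed

lemma nn_integral_std_normal: "(\<integral>\<^sup>+z. ennreal (std_normal_density z) \<partial>lborel) = 1"
  by (subst nn_integral_eq_integral) auto

lemma mix_measure:
  fixes r \<theta> \<sigma> :: real
  assumes r: "r > 0" and \<sigma>: "\<sigma> > 0"
    and pm: "(\<lambda>x. ennreal (vg_density r \<theta> \<sigma> 0 x)) \<in> borel_measurable borel"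
  shows "distr (density (lborel \<Otimes>\<^sub>M lborel) (\<lambda>w. ennreal (Hg r (fst w) * std_normal_density (snd w)))) lborel
            (\<lambda>w. \<theta> * fst w + \<sigma> * sqrt (fst w) * snd w) = density lborel (\<lambda>x. ennreal (vg_density r \<theta> \<sigma> 0 x))"
proof -
  define I where "I x = (\<integral>\<^sup>+v. ennreal (Hg r v * normal_density (\<theta> * v) (\<sigma> * sqrt v) x) \<partial>lborel)" for x
  have Im: "I \<in> borel_measurable lborel" unfolding I_def by measurable
  have "(\<integral>\<^sup>+x. I x \<partial>lborel) = (\<integral>\<^sup>+x. I x * (\<lambda>_. 1) x \<partial>lborel)" by simp
  also have "\<dots> = (\<integral>\<^sup>+w. ennreal (Hg r (fst w) * std_normal_density (snd w)) * (\<lambda>_. 1) (\<theta> * fst w + \<sigma> * sqrt (fst w) * snd w) \<partial>(lborel \<Otimes>\<^sub>M lborel))"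
    unfolding I_def by (rule chain[OF r \<sigma>, symmetric]) simp
  also have "\<dots> = (\<integral>\<^sup>+v. \<integral>\<^sup>+z. ennreal (Hg r v) * ennreal (std_normal_density z) \<partial>lborel \<partial>lborel)"
  proof -
    have m: "(\<lambda>w. ennreal (Hg r (fst w) * std_normal_density (snd w))) \<in> borel_measurable (lborel \<Otimes>\<^sub>M lborel)"
      by measurable
    show ?thesis using lborel.nn_integral_fst[OF m] Hg_nonneg[OF r] by (simp add: ennreal_mult)
  qed
  also have "\<dots> = (\<integral>\<^sup>+v. ennreal (Hg r v) \<partial>lborel)"
    by (simp add: nn_integral_cmult nn_integral_std_normal)
  also have "\<dots> = 1" by (rule nn_integral_Hg[OF r])
  finally have tot: "(\<integral>\<^sup>+x. I x \<partial>lborel) \<noteq> \<infinity>" by simp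
  have AEfin: "AE x in lborel. I x \<noteq> \<infinity>" by (rule nn_integral_PInf_AE[OF Im tot])
  have AEeq: "AE x in lborel. I x = ennreal (vg_density r \<theta> \<sigma> 0 x)"
    using AEfin AE_lborel_singleton[of 0]
  proof eventually_elim
    case (elim x)
    then show ?case using mix_point[OF r \<sigma>, of x \<theta>] unfolding I_def Hg_def by simp
  qed
  have Tm: "(\<lambda>w. \<theta> * fst w + \<sigma> * sqrt (fst w) * snd w) \<in> measurable (lborel \<Otimes>\<^sub>M lborel) lborel"
    by measurable
  show ?thesis
  proof (rule measure_eqI)
    show "sets (distr (density (lborel \<Otimes>\<^sub>M lborel) (\<lambda>w. ennreal (Hg r (fst w) * std_normal_density (snd w)))) lborel
            (\<lambda>w. \<theta> * fst w + \<sigma> * sqrt (fst w) * snd w)) = sets (density lborel (\<lambda>x. ennreal (vg_density r \<theta> \<sigma> 0 x)))"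
      by simp
  next
    fix A assume "A \<in> sets (distr (density (lborel \<Otimes>\<^sub>M lborel) (\<lambda>w. ennreal (Hg r (fst w) * std_normal_density (snd w)))) lborel
            (\<lambda>w. \<theta> * fst w + \<sigma> * sqrt (fst w) * snd w))"
    then have A[measurable]: "A \<in> sets borel" by simp
    have "emeasure (distr (density (lborel \<Otimes>\<^sub>M lborel) (\<lambda>w. ennreal (Hg r (fst w) * std_normal_density (snd w)))) lborel
            (\<lambda>w. \<theta> * fst w + \<sigma> * sqrt (fst w) * snd w)) A =
          (\<integral>\<^sup>+w. ennreal (Hg r (fst w) * std_normal_density (snd w)) * indicator A (\<theta> * fst w + \<sigma> * sqrt (fst w) * snd w) \<partial>(lborel \<Otimes>\<^sub>M lborel))"
    proof -
      have P: "(\<lambda>w. \<theta> * fst w + \<sigma> * sqrt (fst w) * snd w) -` A \<inter> space (lborel \<Otimes>\<^sub>M lborel) \<in> sets (lborel \<Otimes>\<^sub>M lborel)"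
      proof -
        have A': "A \<in> sets lborel" using A by simp
        show ?thesis by (rule measurable_sets[OF Tm A'])
      qed
      have dm: "(\<lambda>w. ennreal (Hg r (fst w) * std_normal_density (snd w))) \<in> borel_measurable (lborel \<Otimes>\<^sub>M lborel)"
        by measurable
      have Tm': "(\<lambda>w. \<theta> * fst w + \<sigma> * sqrt (fst w) * snd w) \<in> measurable (density (lborel \<Otimes>\<^sub>M lborel) (\<lambda>w. ennreal (Hg r (fst w) * std_normal_density (snd w)))) lborel"
        using Tm by simp
      have A'': "A \<in> sets lborel" using A by simp
      have "emeasure (distr (density (lborel \<Otimes>\<^sub>M lborel) (\<lambda>w. ennreal (Hg r (fst w) * std_normal_density (snd w)))) lborel
            (\<lambda>w. \<theta> * fst w + \<sigma> * sqrt (fst w) * snd w)) A =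
            emeasure (density (lborel \<Otimes>\<^sub>M lborel) (\<lambda>w. ennreal (Hg r (fst w) * std_normal_density (snd w))))
              ((\<lambda>w. \<theta> * fst w + \<sigma> * sqrt (fst w) * snd w) -` A \<inter> space (lborel \<Otimes>\<^sub>M lborel))"
        using emeasure_distr[OF Tm' A''] by simp
      also have "\<dots> = (\<integral>\<^sup>+w. ennreal (Hg r (fst w) * std_normal_density (snd w)) *
              indicator ((\<lambda>w. \<theta> * fst w + \<sigma> * sqrt (fst w) * snd w) -` A \<inter> space (lborel \<Otimes>\<^sub>M lborel)) w \<partial>(lborel \<Otimes>\<^sub>M lborel))"
        by (rule emeasure_density[OF dm P])
      also have "\<dots> = (\<integral>\<^sup>+w. ennreal (Hg r (fst w) * std_normal_density (snd w)) * indicator A (\<theta> * fst w + \<sigma> * sqrt (fst w) * snd w) \<partial>(lborel \<Otimes>\<^sub>M lborel))"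
        by (intro nn_integral_cong) (auto simp: space_pair_measure split: split_indicator)
      finally show ?thesis .
    qed
    also have "\<dots> = (\<integral>\<^sup>+x. I x * indicator A x \<partial>lborel)"
      unfolding I_def by (rule chain[OF r \<sigma>]) measurable
    also have "\<dots> = (\<integral>\<^sup>+x. ennreal (vg_density r \<theta> \<sigma> 0 x) * indicator A x \<partial>lborel)"
      using AEeq by (intro nn_integral_cong_AE) auto
    also have "\<dots> = emeasure (density lborel (\<lambda>x. ennreal (vg_density r \<theta> \<sigma> 0 x))) A"
      using pm by (subst emeasure_density) auto
    finally show "emeasure (distr (density (lborel \<Otimes>\<^sub>M lborel) (\<lambda>w. ennreal (Hg r (fst w) * std_normal_density (snd w)))) lborel
            (\<lambda>w. \<theta> * fst w + \<sigma> * sqrt (fst w) * snd w)) A = emeasure (density lborel (\<lambda>x. ennreal (vg_density r \<theta> \<sigma> 0 x))) A" .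
  qed
qed

lemma prod_hbi:
  fixes f g :: "real \<Rightarrow> real"
  assumes f: "integrable lborel f" and g: "integrable lborel g"
  shows "has_bochner_integral (lborel \<Otimes>\<^sub>M lborel) (\<lambda>w. f (fst w) * g (snd w)) (integral\<^sup>L lborel f * integral\<^sup>L lborel g)"
proof -
  have fm[measurable]: "f \<in> borel_measurable lborel" using f by (rule borel_measurable_integrable)
  have gm[measurable]: "g \<in> borel_measurable lborel" using g by (rule borel_measurable_integrable)
  have fm'[measurable]: "f \<in> borel_measurable borel" using fm by simp
  have gm'[measurable]: "g \<in> borel_measurable borel" using gm by simp
  have int: "integrable (lborel \<Otimes>\<^sub>M lborel) (\<lambda>w. f (fst w) * g (snd w))"
  proof (rule integrableI_bounded)
    show "(\<lambda>w. f (fst w) * g (snd w)) \<in> borel_measurable (lborel \<Otimes>\<^sub>M lborel)" by measurable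
    have m: "(\<lambda>w. ennreal (norm (f (fst w) * g (snd w)))) \<in> borel_measurable (lborel \<Otimes>\<^sub>M lborel)" by measurable
    have "(\<integral>\<^sup>+w. ennreal (norm (f (fst w) * g (snd w))) \<partial>(lborel \<Otimes>\<^sub>M lborel)) =
          (\<integral>\<^sup>+v. \<integral>\<^sup>+z. ennreal (norm (f v)) * ennreal (norm (g z)) \<partial>lborel \<partial>lborel)"
      using lborel.nn_integral_fst[OF m] by (simp add: abs_mult ennreal_mult)
    also have "\<dots> = (\<integral>\<^sup>+v. ennreal (norm (f v)) \<partial>lborel) * (\<integral>\<^sup>+z. ennreal (norm (g z)) \<partial>lborel)"
      by (simp add: nn_integral_cmult nn_integral_multc)
    also have "\<dots> < \<infinity>"
      using f g unfolding integrable_iff_bounded by (simp add: ennreal_mult_less_top)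
    finally show "(\<integral>\<^sup>+w. ennreal (norm (f (fst w) * g (snd w))) \<partial>(lborel \<Otimes>\<^sub>M lborel)) < \<infinity>" .
  qed
  have "integral\<^sup>L (lborel \<Otimes>\<^sub>M lborel) (\<lambda>w. f (fst w) * g (snd w)) = (\<integral>v. (\<integral>z. f v * g z \<partial>lborel) \<partial>lborel)"
    using lborel_pair.integral_fst'[OF int] by simp
  also have "\<dots> = integral\<^sup>L lborel f * integral\<^sup>L lborel g" by simp
  finally show ?thesis using int by (simp add: has_bochner_integral_iff)
qed

lemma fm_int:
  assumes r: "r > 0"
  shows "integrable lborel (\<lambda>v. Hg r v * v ^ j * sqrt v ^ m)"
proof (rule Bochner_Integration.integrable_bound)
  show "integrable lborel (\<lambda>v. Hg r v * v ^ j + Hg r v * v ^ (j + m))"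
    using Hg_integral[OF r, of j] Hg_integral[OF r, of "j + m"] by (auto simp: has_bochner_integral_iff)
  show "(\<lambda>v. Hg r v * v ^ j * sqrt v ^ m) \<in> borel_measurable lborel" by measurable
  show "AE v in lborel. norm (Hg r v * v ^ j * sqrt v ^ m) \<le> norm (Hg r v * v ^ j + Hg r v * v ^ (j + m))"
  proof (rule AE_I2)
    fix v :: real
    show "norm (Hg r v * v ^ j * sqrt v ^ m) \<le> norm (Hg r v * v ^ j + Hg r v * v ^ (j + m))"
    proof (cases "v > 0")
      case True
      have h: "0 \<le> Hg r v" by (rule Hg_nonneg[OF r])
      have s: "sqrt v ^ m \<le> 1 + v ^ m"
      proof (cases "v \<le> 1")
        case True
        then have "sqrt v ^ m \<le> 1" using \<open>v > 0\<close> by (intro power_le_one) auto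
        then show ?thesis using \<open>v > 0\<close> by (smt (verit) zero_le_power)
      next
        case False
        then have "1 * v \<le> v * v" by (intro mult_right_mono) auto
        then have "sqrt v \<le> sqrt (v * v)" by (intro real_sqrt_le_mono) simp
        then have "sqrt v \<le> v" using \<open>v > 0\<close> by simp
        then have "sqrt v ^ m \<le> v ^ m" using \<open>v > 0\<close> by (intro power_mono) auto
        then show ?thesis by simp
      qed
      have "Hg r v * v ^ j * sqrt v ^ m \<le> Hg r v * v ^ j * (1 + v ^ m)"
        using h True s by (intro mult_left_mono) auto
      moreover have "0 \<le> Hg r v * v ^ j * sqrt v ^ m" using h True by simp
      ultimately show ?thesis using h True by (simp add: algebra_simps power_add)
    next
      case False
      then show ?thesis by (simp add: Hg_def)
    qed
  qed
qed

lemma fm_even: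
  "Hg r v * v ^ j * sqrt v ^ (2 * i) = Hg r v * v ^ (j + i)"
proof (cases "v > 0")
  case True
  then show ?thesis by (simp add: power_mult power_add)
next
  case False
  then show ?thesis by (simp add: Hg_def)
qed

lemma mix_moment:
  assumes r: "r > 0"
  shows "has_bochner_integral (lborel \<Otimes>\<^sub>M lborel)
     (\<lambda>w. Hg r (fst w) * std_normal_density (snd w) * (\<theta> * fst w + \<sigma> * sqrt (fst w) * snd w) ^ k)
     (\<Sum>m=0..k. of_nat (k choose m) * \<sigma> ^ m * \<theta> ^ (k - m) *
        (integral\<^sup>L lborel (\<lambda>v. Hg r v * v ^ (k - m) * sqrt v ^ m) * integral\<^sup>L lborel (\<lambda>z. std_normal_density z * z ^ m)))"
proof -
  have eq: "Hg r (fst w) * std_normal_density (snd w) * (\<theta> * fst w + \<sigma> * sqrt (fst w) * snd w) ^ k =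
            (\<Sum>m=0..k. of_nat (k choose m) * \<sigma> ^ m * \<theta> ^ (k - m) *
              ((Hg r (fst w) * fst w ^ (k - m) * sqrt (fst w) ^ m) * (std_normal_density (snd w) * snd w ^ m)))" for w
  proof -
    have "(\<theta> * fst w + \<sigma> * sqrt (fst w) * snd w) ^ k = (\<sigma> * sqrt (fst w) * snd w + \<theta> * fst w) ^ k"
      by (simp add: add.commute)
    also have "\<dots> = (\<Sum>m=0..k. of_nat (k choose m) * (\<sigma> * sqrt (fst w) * snd w) ^ m * (\<theta> * fst w) ^ (k - m))"
      unfolding atLeast0AtMost by (rule binomial_ring)
    finally show ?thesis
      by (simp add: sum_distrib_left power_mult_distrib mult_ac)
  qed
  show ?thesis
    unfolding eq
    by (intro has_bochner_integral_sum has_bochner_integral_mult_right prod_hbi fm_int[OF r] integrable_std_normal_moment)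
qed


lemma Gamma_poch: "a > 0 \<Longrightarrow> Gamma (a + real n) = Gamma a * pochhammer a n"
proof -
  assume a: "a > 0"
  have "a \<notin> \<int>\<^sub>\<le>\<^sub>0" using a by (auto elim!: nonpos_Ints_cases)
  then have "pochhammer a n = Gamma (a + of_nat n) / Gamma a" by (rule pochhammer_Gamma)
  moreover have "Gamma a \<noteq> 0" using a by (simp add: Gamma_real_pos[THEN less_imp_neq, symmetric])
  ultimately show ?thesis by simp
qed

lemma sum_even:
  fixes f :: "nat \<Rightarrow> real"
  assumes odd0: "\<And>m. odd m \<Longrightarrow> f m = 0"
  shows "(\<Sum>m=0..k. f m) = (\<Sum>i=0..k div 2. f (2 * i))"
proof -
  have "(\<Sum>i=0..k div 2. f (2 * i)) = (\<Sum>m\<in>(\<lambda>i. 2 * i) ` {0..k div 2}. f m)"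
    by (subst sum.reindex) (auto simp: inj_on_def)
  also have "\<dots> = (\<Sum>m=0..k. f m)"
  proof (rule sum.mono_neutral_left)
    show "(\<lambda>i. 2 * i) ` {0..k div 2} \<subseteq> {0..k}" by auto
    show "\<forall>m\<in>{0..k} - (\<lambda>i. 2 * i) ` {0..k div 2}. f m = 0"
    proof
      fix m assume m: "m \<in> {0..k} - (\<lambda>i. 2 * i) ` {0..k div 2}"
      show "f m = 0"
      proof (cases "even m")
        case True
        then obtain i where "m = 2 * i" by blast
        with m have False by auto
        then show ?thesis ..
      qed (rule odd0)
    qed
  qed simp
  finally show ?thesis by simp
qed

lemma even_term:
  fixes a \<sigma> \<theta> :: real
  assumes "2 * i \<le> k"
  shows "of_nat (k choose (2 * i)) * \<sigma> ^ (2 * i) * \<theta> ^ (k - 2 * i) *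
           ((2 ^ (k - i) * pochhammer a (k - i)) * (fact (2 * i) / (2 ^ i * fact i))) =
         fact k * (pochhammer a (k - i) / fact (k - i) * of_nat ((k - i) choose i) * (2 * \<theta>) ^ (k - i - i) * (\<sigma>\<^sup>2) ^ i)"
proof -
  have b1: "(of_nat (k choose (2 * i)) :: real) = fact k / (fact (2 * i) * fact (k - 2 * i))"
    using assms by (rule binomial_fact)
  have b2: "(of_nat ((k - i) choose i) :: real) = fact (k - i) / (fact i * fact (k - i - i))"
    using assms by (intro binomial_fact) auto
  have e1: "k - i - i = k - 2 * i" by simp
  have e2: "(2::real) ^ (k - i) = 2 ^ (k - 2 * i) * 2 ^ i"
    using assms by (simp add: power_add[symmetric])
  have e3: "\<sigma> ^ (2 * i) = (\<sigma>\<^sup>2) ^ i" by (simp add: power_mult)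
  show ?thesis unfolding b1 b2 e1 e2 e3
    by (simp add: power_mult_distrib field_simps)
qed

lemma target_term:
  fixes G P1 P2 S p q :: real
  assumes G: "G \<noteq> 0" and S: "S \<noteq> 0" and j: "j \<le> k"
  shows "S ^ k / G\<^sup>2 * (of_nat (k choose j) * (- (q / S)) ^ j * (p / S) ^ (k - j) * (G * P1) * (G * P2)) =
         fact k * ((- q) ^ j * (P1 / fact j) * (p ^ (k - j) * (P2 / fact (k - j))))"
proof -
  have b: "(of_nat (k choose j) :: real) = fact k / (fact j * fact (k - j))"
    using j by (rule binomial_fact)
  have Sk: "S ^ k = S ^ j * S ^ (k - j)" using j by (simp add: power_add[symmetric])
  show ?thesis unfolding b Sk using G S
    by (simp add: power_divide power_minus' field_simps power2_eq_square)
qed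

lemma PA_nth: "PA a $ n = pochhammer a n / fact n"
  by (simp add: PA_def)

lemma final_value:
  fixes r \<theta> \<sigma> :: real and k :: nat
  assumes r: "r > 0" and \<sigma>: "\<sigma> > 0"
  shows "(\<Sum>m=0..k. of_nat (k choose m) * \<sigma> ^ m * \<theta> ^ (k - m) *
        (integral\<^sup>L lborel (\<lambda>v. Hg r v * v ^ (k - m) * sqrt v ^ m) * integral\<^sup>L lborel (\<lambda>z. std_normal_density z * z ^ m))) =
      \<sigma> ^ (2 * k) / (Gamma (r / 2))\<^sup>2 *
      (\<Sum>j = 0..k. real (k choose j)
          * (- ((sqrt (\<theta>\<^sup>2 + \<sigma>\<^sup>2) - \<theta>) / \<sigma>\<^sup>2)) ^ j
          * ((sqrt (\<theta>\<^sup>2 + \<sigma>\<^sup>2) + \<theta>) / \<sigma>\<^sup>2) ^ (k - j)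
          * Gamma (r / 2 + real j) * Gamma (r / 2 + real (k - j)))"
proof -
  define a where "a = r / 2"
  define s where "s = sqrt (\<theta>\<^sup>2 + \<sigma>\<^sup>2)"
  define p where "p = s + \<theta>"
  define q where "q = s - \<theta>"
  have a: "a > 0" using r by (simp add: a_def)
  have G: "Gamma a \<noteq> 0" using a by (simp add: Gamma_real_pos[THEN less_imp_neq, symmetric])
  have ss: "s\<^sup>2 = \<theta>\<^sup>2 + \<sigma>\<^sup>2" unfolding s_def by (simp add: add_nonneg_nonneg)
  have pq: "p * (- q) = - (\<sigma>\<^sup>2)" using ss by (simp add: p_def q_def algebra_simps power2_eq_square)
  have pq2: "p + (- q) = 2 * \<theta>" by (simp add: p_def q_def)
  define X where "X i = PA a $ (k - i) * of_nat ((k - i) choose i) * (2 * \<theta>) ^ (k - i - i) * (\<sigma>\<^sup>2) ^ i" for i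
  define F where "F m = of_nat (k choose m) * \<sigma> ^ m * \<theta> ^ (k - m) *
        (integral\<^sup>L lborel (\<lambda>v. Hg r v * v ^ (k - m) * sqrt v ^ m) * integral\<^sup>L lborel (\<lambda>z. std_normal_density z * z ^ m))" for m
  have odd0: "F m = 0" if "odd m" for m
  proof -
    obtain j where mj: "m = 2 * j + 1" using \<open>odd m\<close> by (rule oddE)
    have "integral\<^sup>L lborel (\<lambda>z. std_normal_density z * z ^ m) = 0"
      unfolding mj by (rule integral_std_normal_moment_odd)
    then show ?thesis by (simp only: F_def mult_zero_right)
  qed
  have evenF: "F (2 * i) = fact k * X i" if "i \<in> {0..k div 2}" for i
  proof -
    have ik: "2 * i \<le> k" using that by auto
    have I2: "integral\<^sup>L lborel (\<lambda>z. std_normal_density z * z ^ (2 * i)) = fact (2 * i) / (2 ^ i * fact i)"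
      by (rule integral_std_normal_moment_even)
    have "integral\<^sup>L lborel (\<lambda>v. Hg r v * v ^ (k - 2 * i) * sqrt v ^ (2 * i)) = integral\<^sup>L lborel (\<lambda>v. Hg r v * v ^ (k - i))"
      using ik by (simp add: fm_even)
    also have "\<dots> = 2 ^ (k - i) * Gamma (r/2 + real (k - i)) / Gamma (r/2)"
      using Hg_integral[OF r, of "k - i"] by (simp add: has_bochner_integral_iff)
    also have "\<dots> = 2 ^ (k - i) * pochhammer a (k - i)"
      using G by (simp add: a_def[symmetric] Gamma_poch[OF a])
    finally have I1: "integral\<^sup>L lborel (\<lambda>v. Hg r v * v ^ (k - 2 * i) * sqrt v ^ (2 * i)) = 2 ^ (k - i) * pochhammer a (k - i)" .
    show ?thesis unfolding F_def I1 I2 X_def PA_nth by (rule even_term[OF ik])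
  qed
  have "(\<Sum>m=0..k. F m) = (\<Sum>i=0..k div 2. F (2 * i))" by (rule sum_even[OF odd0])
  also have "\<dots> = (\<Sum>i=0..k div 2. fact k * X i)" by (intro sum.cong refl evenF)
  also have "\<dots> = fact k * (\<Sum>i=0..k. X i)"
  proof -
    have "(\<Sum>i=0..k div 2. X i) = (\<Sum>i=0..k. X i)"
    proof (rule sum.mono_neutral_left)
      show "\<forall>i\<in>{0..k} - {0..k div 2}. X i = 0"
      proof
        fix i assume "i \<in> {0..k} - {0..k div 2}"
        then have "k - i < i" by auto
        then show "X i = 0" by (simp add: X_def)
      qed
    qed auto
    then show ?thesis by (simp only: sum_distrib_left[symmetric])
  qed
  also have "(\<Sum>i=0..k. X i) = (PA a oo (fps_const (2 * \<theta>) * fps_X + fps_const (\<sigma>\<^sup>2) * fps_X ^ 2)) $ k"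
    unfolding coeff_rhs X_def ..
  also have "fps_const (2 * \<theta>) * fps_X + fps_const (\<sigma>\<^sup>2) * fps_X ^ 2 =
             fps_const (p + (- q)) * fps_X - fps_const (p * (- q)) * fps_X ^ 2"
    unfolding pq pq2 by simp
  also have "PA a oo (fps_const (p + (- q)) * fps_X - fps_const (p * (- q)) * fps_X ^ 2) =
             (PA a oo (fps_const (- q) * fps_X)) * (PA a oo (fps_const p * fps_X))"
    by (rule key_fps[symmetric])
  also have "((PA a oo (fps_const (- q) * fps_X)) * (PA a oo (fps_const p * fps_X))) $ k =
             (\<Sum>j=0..k. (- q) ^ j * PA a $ j * (p ^ (k - j) * PA a $ (k - j)))"
    by (rule coeff_lhs)
  finally have L: "(\<Sum>m=0..k. F m) = fact k * (\<Sum>j=0..k. (- q) ^ j * PA a $ j * (p ^ (k - j) * PA a $ (k - j)))" .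
  have R: "\<sigma> ^ (2 * k) / (Gamma (r / 2))\<^sup>2 *
      (\<Sum>j = 0..k. real (k choose j)
          * (- ((sqrt (\<theta>\<^sup>2 + \<sigma>\<^sup>2) - \<theta>) / \<sigma>\<^sup>2)) ^ j
          * ((sqrt (\<theta>\<^sup>2 + \<sigma>\<^sup>2) + \<theta>) / \<sigma>\<^sup>2) ^ (k - j)
          * Gamma (r / 2 + real j) * Gamma (r / 2 + real (k - j))) =
      fact k * (\<Sum>j=0..k. (- q) ^ j * PA a $ j * (p ^ (k - j) * PA a $ (k - j)))"
  proof -
    have "\<sigma> ^ (2 * k) / (Gamma (r / 2))\<^sup>2 *
      (\<Sum>j = 0..k. real (k choose j)
          * (- ((sqrt (\<theta>\<^sup>2 + \<sigma>\<^sup>2) - \<theta>) / \<sigma>\<^sup>2)) ^ j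
          * ((sqrt (\<theta>\<^sup>2 + \<sigma>\<^sup>2) + \<theta>) / \<sigma>\<^sup>2) ^ (k - j)
          * Gamma (r / 2 + real j) * Gamma (r / 2 + real (k - j))) =
      (\<Sum>j = 0..k. (\<sigma>\<^sup>2) ^ k / (Gamma a)\<^sup>2 * (real (k choose j)
          * (- (q / \<sigma>\<^sup>2)) ^ j * (p / \<sigma>\<^sup>2) ^ (k - j)
          * (Gamma a * pochhammer a j) * (Gamma a * pochhammer a (k - j))))"
      unfolding sum_distrib_left a_def[symmetric] s_def[symmetric] p_def[symmetric] q_def[symmetric] Gamma_poch[OF a]
      by (intro sum.cong refl) (simp add: power_mult)
    also have "\<dots> = (\<Sum>j = 0..k. fact k * ((- q) ^ j * (pochhammer a j / fact j) * (p ^ (k - j) * (pochhammer a (k - j) / fact (k - j)))))"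
      using \<sigma> by (intro sum.cong refl target_term G) auto
    finally show ?thesis by (simp add: sum_distrib_left PA_nth)
  qed
  show ?thesis unfolding R L[unfolded F_def] ..
qed

theorem mainTheorem3:
  fixes M :: "'a measure" and Y :: "'a \<Rightarrow> real"
    and r \<theta> \<sigma> :: real and k :: nat
  assumes "prob_space M"
    and "r > 0" and "\<sigma> > 0"
    and "distributed M lborel Y (\<lambda>x. ennreal (vg_density r \<theta> \<sigma> 0 x))"
    and "k \<ge> 1"
  shows "integrable M (\<lambda>\<omega>. Y \<omega> ^ k) \<and>
    (\<integral>\<omega>. Y \<omega> ^ k \<partial>M) =
      \<sigma> ^ (2 * k) / (Gamma (r / 2))\<^sup>2 *
      (\<Sum>j = 0..k. real (k choose j)
          * (- ((sqrt (\<theta>\<^sup>2 + \<sigma>\<^sup>2) - \<theta>) / \<sigma>\<^sup>2)) ^ j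
          * ((sqrt (\<theta>\<^sup>2 + \<sigma>\<^sup>2) + \<theta>) / \<sigma>\<^sup>2) ^ (k - j)
          * Gamma (r / 2 + real j) * Gamma (r / 2 + real (k - j)))"
proof -
  note r = assms(2) and \<sigma> = assms(3)
  have D: "distr M lborel Y = density lborel (\<lambda>x. ennreal (vg_density r \<theta> \<sigma> 0 x))"
    and pm: "(\<lambda>x. ennreal (vg_density r \<theta> \<sigma> 0 x)) \<in> borel_measurable lborel"
    and Ym: "Y \<in> measurable M lborel"
    using assms(4) unfolding distributed_def by auto
  have pm': "(\<lambda>x. ennreal (vg_density r \<theta> \<sigma> 0 x)) \<in> borel_measurable borel" using pm by simp
  define Q where "Q = density (lborel \<Otimes>\<^sub>M lborel) (\<lambda>w. ennreal (Hg r (fst w) * std_normal_density (snd w)))"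
  define T where "T w = \<theta> * fst w + \<sigma> * sqrt (fst w) * snd w" for w :: "real \<times> real"
  have MQ: "distr M lborel Y = distr Q lborel T"
    unfolding D Q_def T_def using mix_measure[OF r \<sigma> pm'] by simp
  have Tm: "T \<in> measurable Q lborel" unfolding Q_def T_def by simp
  have pk[measurable]: "(\<lambda>x::real. x ^ k) \<in> borel_measurable lborel" by measurable
  have gm: "(\<lambda>w. Hg r (fst w) * std_normal_density (snd w)) \<in> borel_measurable (lborel \<Otimes>\<^sub>M lborel)" by measurable
  have g0: "AE w in lborel \<Otimes>\<^sub>M lborel. 0 \<le> Hg r (fst w) * std_normal_density (snd w)"
    using Hg_nonneg[OF r] by simp
  have Tkm: "(\<lambda>w. T w ^ k) \<in> borel_measurable (lborel \<Otimes>\<^sub>M lborel)" unfolding T_def by measurable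
  define V where "V = (\<Sum>m=0..k. of_nat (k choose m) * \<sigma> ^ m * \<theta> ^ (k - m) *
        (integral\<^sup>L lborel (\<lambda>v. Hg r v * v ^ (k - m) * sqrt v ^ m) * integral\<^sup>L lborel (\<lambda>z. std_normal_density z * z ^ m)))"
  have HB: "has_bochner_integral (lborel \<Otimes>\<^sub>M lborel) (\<lambda>w. (Hg r (fst w) * std_normal_density (snd w)) *\<^sub>R (T w ^ k)) V"
    using mix_moment[OF r, of \<theta> \<sigma> k] unfolding V_def T_def by simp
  have "integrable M (\<lambda>\<omega>. Y \<omega> ^ k) \<longleftrightarrow> integrable (distr M lborel Y) (\<lambda>x. x ^ k)"
    using integrable_distr_eq[OF Ym pk] by simp
  also have "\<dots> \<longleftrightarrow> integrable Q (\<lambda>w. T w ^ k)"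
    unfolding MQ using integrable_distr_eq[OF Tm pk] by simp
  also have "\<dots> \<longleftrightarrow> integrable (lborel \<Otimes>\<^sub>M lborel) (\<lambda>w. (Hg r (fst w) * std_normal_density (snd w)) *\<^sub>R (T w ^ k))"
    unfolding Q_def by (rule integrable_density[OF Tkm gm g0])
  finally have int: "integrable M (\<lambda>\<omega>. Y \<omega> ^ k)" using HB by (simp add: has_bochner_integral_iff)
  have "(\<integral>\<omega>. Y \<omega> ^ k \<partial>M) = integral\<^sup>L (distr M lborel Y) (\<lambda>x. x ^ k)"
    using integral_distr[OF Ym pk] by simp
  also have "\<dots> = integral\<^sup>L Q (\<lambda>w. T w ^ k)"
    unfolding MQ using integral_distr[OF Tm pk] by simp
  also have "\<dots> = integral\<^sup>L (lborel \<Otimes>\<^sub>M lborel) (\<lambda>w. (Hg r (fst w) * std_normal_density (snd w)) *\<^sub>R (T w ^ k))"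
    unfolding Q_def by (rule integral_density[OF Tkm gm g0])
  also have "\<dots> = V" using HB by (simp add: has_bochner_integral_iff)
  also have "\<dots> = \<sigma> ^ (2 * k) / (Gamma (r / 2))\<^sup>2 *
      (\<Sum>j = 0..k. real (k choose j)
          * (- ((sqrt (\<theta>\<^sup>2 + \<sigma>\<^sup>2) - \<theta>) / \<sigma>\<^sup>2)) ^ j
          * ((sqrt (\<theta>\<^sup>2 + \<sigma>\<^sup>2) + \<theta>) / \<sigma>\<^sup>2) ^ (k - j)
          * Gamma (r / 2 + real j) * Gamma (r / 2 + real (k - j)))"
    unfolding V_def by (rule final_value[OF r \<sigma>])
  finally show ?thesis using int by simp
qed


end
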